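(* Let $G$ be a graph and $\lambda>0$. If two nodes $a,b$ of $G$ are $(\ell,d)$ connected, then $$\mathbb{E}_G[x_ax_b]\;\ge\;1-\frac{2}{1+\dfrac{(1+(\tanh\lambda)^{\ell})^{d}}{(1-(\tanh\lambda)^{\ell})^{d}}}.$$
   Context: For a graph $G=(V,E)$ and $\lambda>0$, $f_G(\mathbf{x})=\frac{1}{Z}\exp\big(\sum_{(i,j)\in E}\lambda x_ix_j\big)$ on $\{-1,+1\}^V$, and $\mathbb{E}_G$ denotes expectation under $f_G$. Two nodes $a,b$ are $(\ell,d)$ connected if there exist $d$ node-disjoint paths between $a$ and $b$, each of length at most $\ell$. *)

theory Defs
  imports Complex_Main
begin

definition simple_graph :: "'a set \<Rightarrow> 'a set set \<Rightarrow> bool" where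
  "simple_graph V E \<longleftrightarrow> finite V \<and> (\<forall>e\<in>E. e \<subseteq> V \<and> card e = 2)"

definition configs :: "'a set \<Rightarrow> ('a \<Rightarrow> real) set" where
  "configs V = {x. (\<forall>v\<in>V. x v = -1 \<or> x v = 1) \<and> (\<forall>v. v \<notin> V \<longrightarrow> x v = 0)}"

definition ising_weight :: "'a set set \<Rightarrow> real \<Rightarrow> ('a \<Rightarrow> real) \<Rightarrow> real" where
  "ising_weight E lam x = exp (\<Sum>e\<in>E. lam * (\<Prod>v\<in>e. x v))"

definition ising_expect :: "'a set \<Rightarrow> 'a set set \<Rightarrow> real \<Rightarrow> (('a \<Rightarrow> real) \<Rightarrow> real) \<Rightarrow> real" where
  "ising_expect V E lam g =
     (\<Sum>x\<in>configs V. g x * ising_weight E lam x) / (\<Sum>x\<in>configs V. ising_weight E lam x)"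

(* p is a (simple) path from a to b in the graph; its length is length p - 1 edges *)
definition is_path :: "'a set set \<Rightarrow> 'a \<Rightarrow> 'a \<Rightarrow> 'a list \<Rightarrow> bool" where
  "is_path E a b p \<longleftrightarrow> p \<noteq> [] \<and> hd p = a \<and> last p = b \<and> distinct p \<and>
     (\<forall>i. Suc i < length p \<longrightarrow> {p ! i, p ! Suc i} \<in> E)"

definition ld_connected :: "'a set set \<Rightarrow> nat \<Rightarrow> nat \<Rightarrow> 'a \<Rightarrow> 'a \<Rightarrow> bool" where
  "ld_connected E l d a b \<longleftrightarrow>
     (\<exists>P :: nat \<Rightarrow> 'a list.
        inj_on P {..<d} \<and>
        (\<forall>i<d. is_path E a b (P i) \<and> length (P i) - 1 \<le> l) \<and>
        (\<forall>i<d. \<forall>j<d. i \<noteq> j \<longrightarrow> set (P i) \<inter> set (P j) \<subseteq> {a, b}))"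

end

theory Submission
  imports Defs
begin


lemma configs_empty: "configs {} = {\<lambda>_. 0}"
  unfolding configs_def by auto

lemma configs_insert:
  assumes "v \<notin> V"
  shows "configs (insert v V) = (\<lambda>y. y(v:=1)) ` configs V \<union> (\<lambda>y. y(v:=-1)) ` configs V"
proof (intro equalityI subsetI)
  fix x assume x: "x \<in> configs (insert v V)"
  have y: "x(v:=0) \<in> configs V" using x assms unfolding configs_def by auto
  have "x v = 1 \<or> x v = -1" using x unfolding configs_def by auto
  then show "x \<in> (\<lambda>y. y(v:=1)) ` configs V \<union> (\<lambda>y. y(v:=-1)) ` configs V"
  proof
    assume "x v = 1" then have "x = (x(v:=0))(v:=1)" by auto
    then show ?thesis using y by blast
  next
    assume "x v = -1" then have "x = (x(v:=0))(v:=-1)" by auto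
    then show ?thesis using y by blast
  qed
next
  fix x assume "x \<in> (\<lambda>y. y(v:=1)) ` configs V \<union> (\<lambda>y. y(v:=-1)) ` configs V"
  then show "x \<in> configs (insert v V)" using assms unfolding configs_def by (auto; metis)
qed

lemma finite_configs: "finite V \<Longrightarrow> finite (configs V)"
  by (induction V rule: finite_induct) (auto simp: configs_empty configs_insert)

lemma sum_configs_insert:
  assumes "v \<notin> V" "finite V"
  shows "(\<Sum>x\<in>configs (insert v V). f x) =
         (\<Sum>y\<in>configs V. f (y(v:=1))) + (\<Sum>y\<in>configs V. f (y(v:=-1)))"
proof -
  have v0: "\<And>y. y \<in> configs V \<Longrightarrow> y v = 0" using assms unfolding configs_def by auto
  have inj1: "inj_on (\<lambda>y. y(v:=c)) (configs V)" for c :: real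
  proof (rule inj_onI)
    fix y z assume "y \<in> configs V" "z \<in> configs V" "y(v:=c) = z(v:=c)"
    then show "y = z" using v0 by (metis fun_upd_idem_iff fun_upd_upd)
  qed
  have disj: "(\<lambda>y. y(v:=1)) ` configs V \<inter> (\<lambda>y. y(v:=-1)) ` configs V = {}"
    by (auto dest: fun_cong[where x=v])
  have "(\<Sum>x\<in>configs (insert v V). f x) =
     (\<Sum>x\<in>(\<lambda>y. y(v:=1)) ` configs V. f x) + (\<Sum>x\<in>(\<lambda>y. y(v:=-1)) ` configs V. f x)"
    unfolding configs_insert[OF assms(1)]
    by (rule sum.union_disjoint) (use assms disj finite_configs in auto)
  also have "\<dots> = (\<Sum>y\<in>configs V. f (y(v:=1))) + (\<Sum>y\<in>configs V. f (y(v:=-1)))"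
    by (simp add: sum.reindex[OF inj1])
  finally show ?thesis .
qed

lemma prod_list_upd:
  "prod_list (map (y(v:=c)) vs) = (c::real) ^ count_list vs v * prod_list (map y (filter (\<lambda>u. u \<noteq> v) vs))"
  by (induction vs) auto

lemma mono_nonneg:
  assumes "finite V"
  shows "set vs \<subseteq> V \<Longrightarrow> 0 \<le> (\<Sum>x\<in>configs V. prod_list (map x vs))"
  using assms
proof (induction V arbitrary: vs rule: finite_induct)
  case empty
  then show ?case by simp
next
  case (insert v V)
  let ?ws = "filter (\<lambda>u. u \<noteq> v) vs"
  have ws: "set ?ws \<subseteq> V" using insert by auto
  have "(\<Sum>x\<in>configs (insert v V). prod_list (map x vs)) =
     (1 + (-1) ^ count_list vs v) * (\<Sum>y\<in>configs V. prod_list (map y ?ws))"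
    by (simp add: sum_configs_insert insert prod_list_upd sum_distrib_left algebra_simps flip: sum.distrib)
  also have "\<dots> \<ge> 0"
  proof (rule mult_nonneg_nonneg)
    show "0 \<le> 1 + (-1::real) ^ count_list vs v" by (cases "even (count_list vs v)") auto
    show "0 \<le> (\<Sum>y\<in>configs V. prod_list (map y ?ws))" using insert.IH ws by blast
  qed
  finally show ?case .
qed

definition pnf :: "'a set \<Rightarrow> (('a \<Rightarrow> real) \<Rightarrow> real) \<Rightarrow> bool" where
  "pnf V f \<longleftrightarrow> (\<exists>L. (\<forall>p\<in>set L. 0 \<le> fst p \<and> set (snd p) \<subseteq> V) \<and>
      (\<forall>x\<in>configs V. f x = (\<Sum>p\<leftarrow>L. fst p * prod_list (map x (snd p)))))"

lemma list_sum_nonneg: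
  assumes "finite V"
  shows "(\<forall>p\<in>set L. 0 \<le> fst p \<and> set (snd p) \<subseteq> V) \<Longrightarrow>
    0 \<le> (\<Sum>x\<in>configs V. (\<Sum>p\<leftarrow>L. fst p * prod_list (map x (snd p))))"
proof (induction L)
  case Nil
  then show ?case by simp
next
  case (Cons p L)
  have "(\<Sum>x\<in>configs V. (\<Sum>p\<leftarrow>p#L. fst p * prod_list (map x (snd p)))) =
     fst p * (\<Sum>x\<in>configs V. prod_list (map x (snd p))) + (\<Sum>x\<in>configs V. (\<Sum>p\<leftarrow>L. fst p * prod_list (map x (snd p))))"
    by (simp add: sum.distrib sum_distrib_left)
  also have "\<dots> \<ge> 0" using Cons mono_nonneg[OF assms, of "snd p"] by auto
  finally show ?case .
qed

lemma pnf_sum_nonneg: "finite V \<Longrightarrow> pnf V f \<Longrightarrow> 0 \<le> (\<Sum>x\<in>configs V. f x)"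
proof -
  assume fV: "finite V" and "pnf V f"
  then obtain L where L: "\<forall>p\<in>set L. 0 \<le> fst p \<and> set (snd p) \<subseteq> V"
    "\<forall>x\<in>configs V. f x = (\<Sum>p\<leftarrow>L. fst p * prod_list (map x (snd p)))"
    unfolding pnf_def by blast
  have "(\<Sum>x\<in>configs V. f x) = (\<Sum>x\<in>configs V. (\<Sum>p\<leftarrow>L. fst p * prod_list (map x (snd p))))"
    using L(2) by (intro sum.cong) auto
  also have "\<dots> \<ge> 0" using list_sum_nonneg[OF fV L(1)] .
  finally show ?thesis .
qed

lemma pnf_const: "0 \<le> c \<Longrightarrow> pnf V (\<lambda>x. c)"
  unfolding pnf_def by (rule exI[of _ "[(c,[])]"]) auto

lemma pnf_var: "v \<in> V \<Longrightarrow> pnf V (\<lambda>x. x v)"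
  unfolding pnf_def by (rule exI[of _ "[(1,[v])]"]) auto

lemma pnf_add: "pnf V f \<Longrightarrow> pnf V g \<Longrightarrow> pnf V (\<lambda>x. f x + g x)"
  unfolding pnf_def
proof (elim exE conjE)
  fix L1 L2 assume "\<forall>p\<in>set L1. 0 \<le> fst p \<and> set (snd p) \<subseteq> V"
    "\<forall>x\<in>configs V. f x = (\<Sum>p\<leftarrow>L1. fst p * prod_list (map x (snd p)))"
    "\<forall>p\<in>set L2. 0 \<le> fst p \<and> set (snd p) \<subseteq> V"
    "\<forall>x\<in>configs V. g x = (\<Sum>p\<leftarrow>L2. fst p * prod_list (map x (snd p)))"
  then show "\<exists>L. (\<forall>p\<in>set L. 0 \<le> fst p \<and> set (snd p) \<subseteq> V) \<and>
      (\<forall>x\<in>configs V. f x + g x = (\<Sum>p\<leftarrow>L. fst p * prod_list (map x (snd p))))"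
    by (intro exI[of _ "L1 @ L2"]) auto
qed

lemma mult_list_sum:
  "(\<Sum>r\<leftarrow>concat (map (\<lambda>p. map (\<lambda>q. (fst p * fst q, snd p @ snd q)) L2) L1). fst r * prod_list (map x (snd r)))
   = (\<Sum>p\<leftarrow>L1. fst p * prod_list (map x (snd p))) * (\<Sum>q\<leftarrow>L2. fst q * prod_list (map (x::'a\<Rightarrow>real) (snd q)))"
proof (induction L1)
  case Nil then show ?case by simp
next
  case (Cons p L1)
  have "(\<Sum>q\<leftarrow>L2. fst p * fst q * prod_list (map x (snd p @ snd q))) =
        fst p * prod_list (map x (snd p)) * (\<Sum>q\<leftarrow>L2. fst q * prod_list (map x (snd q)))"
    by (simp add: sum_list_const_mult[symmetric] o_def algebra_simps)
  then show ?case using Cons by (simp add: o_def algebra_simps)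
qed

lemma pnf_mult: "pnf V f \<Longrightarrow> pnf V g \<Longrightarrow> pnf V (\<lambda>x. f x * g x)"
  unfolding pnf_def
proof (elim exE conjE)
  fix L1 L2 assume "\<forall>p\<in>set L1. 0 \<le> fst p \<and> set (snd p) \<subseteq> V"
    "\<forall>x\<in>configs V. f x = (\<Sum>p\<leftarrow>L1. fst p * prod_list (map x (snd p)))"
    "\<forall>p\<in>set L2. 0 \<le> fst p \<and> set (snd p) \<subseteq> V"
    "\<forall>x\<in>configs V. g x = (\<Sum>p\<leftarrow>L2. fst p * prod_list (map x (snd p)))"
  then show "\<exists>L. (\<forall>p\<in>set L. 0 \<le> fst p \<and> set (snd p) \<subseteq> V) \<and>
      (\<forall>x\<in>configs V. f x * g x = (\<Sum>p\<leftarrow>L. fst p * prod_list (map x (snd p))))"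
    by (intro exI[of _ "concat (map (\<lambda>p. map (\<lambda>q. (fst p * fst q, snd p @ snd q)) L2) L1)"])
       (auto simp: mult_list_sum)
qed

lemma pnf_prod: "finite A \<Longrightarrow> (\<And>i. i \<in> A \<Longrightarrow> pnf V (g i)) \<Longrightarrow> pnf V (\<lambda>x. \<Prod>i\<in>A. g i x)"
  by (induction A rule: finite_induct) (auto intro: pnf_const pnf_mult)



definition ep :: "'a set \<Rightarrow> ('a \<Rightarrow> real) \<Rightarrow> real" where "ep e x = (\<Prod>v\<in>e. x v)"
definition mon :: "'a set set \<Rightarrow> ('a \<Rightarrow> real) \<Rightarrow> real" where "mon Q x = (\<Prod>e\<in>Q. ep e x)"
definition WQ :: "real \<Rightarrow> 'a set set \<Rightarrow> ('a \<Rightarrow> real) \<Rightarrow> real" where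
  "WQ t Q x = (\<Prod>e\<in>Q. 1 + t * ep e x)"
definition SS :: "'a set \<Rightarrow> 'a \<Rightarrow> 'a \<Rightarrow> real \<Rightarrow> (('a \<Rightarrow> real) \<Rightarrow> real) \<Rightarrow> real" where
  "SS V a b \<sigma> f = (\<Sum>x\<in>configs V. (1 + \<sigma> * (x a * x b)) * f x)"

lemma configs_sq: "x \<in> configs V \<Longrightarrow> v \<in> V \<Longrightarrow> x v ^ 2 = 1"
  unfolding configs_def by auto

lemma ep_sq: "e \<subseteq> V \<Longrightarrow> x \<in> configs V \<Longrightarrow> ep e x ^ 2 = 1"
  unfolding ep_def prod_power_distrib using configs_sq by (metis (no_types, lifting) prod.neutral subsetD)

lemma mon_sq: "(\<forall>e\<in>Q. ep e x ^ 2 = 1) \<Longrightarrow> mon Q x ^ 2 = 1"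
  unfolding mon_def prod_power_distrib by simp

lemma pnf_ep: "finite V \<Longrightarrow> e \<subseteq> V \<Longrightarrow> pnf V (ep e)"
  unfolding ep_def[abs_def] by (rule pnf_prod) (auto intro: pnf_var dest: finite_subset)

lemma pnf_mon: "finite V \<Longrightarrow> finite Q \<Longrightarrow> \<forall>e\<in>Q. e \<subseteq> V \<Longrightarrow> pnf V (mon Q)"
  unfolding mon_def[abs_def] by (rule pnf_prod) (auto intro: pnf_ep)

lemma pnf_W: "finite V \<Longrightarrow> finite Q \<Longrightarrow> \<forall>e\<in>Q. e \<subseteq> V \<Longrightarrow> 0 \<le> t \<Longrightarrow> pnf V (\<lambda>x. \<Prod>e\<in>Q. 1 + t * ep e x)"
  by (rule pnf_prod) (auto intro!: pnf_add pnf_mult pnf_const pnf_ep)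

lemma WQ_expand:
  assumes "finite Q"
  shows "WQ t Q x = (\<Sum>H\<in>Pow Q. t ^ card H * mon H x)"
proof -
  have "WQ t Q x = (\<Prod>e\<in>Q. t * ep e x + 1)" unfolding WQ_def by (simp add: add.commute)
  also have "\<dots> = (\<Sum>H\<in>Pow Q. (\<Prod>e\<in>H. t * ep e x) * (\<Prod>e\<in>Q-H. 1))"
    by (rule prod_add[OF assms])
  also have "\<dots> = (\<Sum>H\<in>Pow Q. t ^ card H * mon H x)"
    by (rule sum.cong) (auto simp: prod.distrib mon_def)
  finally show ?thesis .
qed

lemma pair_id:
  assumes fQ: "finite Q" and ep1: "\<forall>e\<in>Q. ep e x ^ 2 = 1" and my: "mon Q x = y"
    and y2: "y ^ 2 = 1" and s2: "\<sigma> ^ 2 = 1"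
  shows "(1 + \<sigma> * y) * WQ t Q x =
    (1/2) * (\<Sum>H\<in>Pow Q. (t ^ card H + \<sigma> * t ^ (card Q - card H)) * ((1 + \<sigma> * y) * mon H x))"
proof -
  define L where "L = (\<Sum>H\<in>Pow Q. t ^ card H * ((1 + \<sigma> * y) * mon H x))"
  have L1: "(1 + \<sigma> * y) * WQ t Q x = L"
    unfolding L_def WQ_expand[OF fQ] sum_distrib_left by (rule sum.cong) auto
  have bij: "bij_betw (\<lambda>H. Q - H) (Pow Q) (Pow Q)"
    by (rule bij_betw_byWitness[where f' = "\<lambda>H. Q - H"]) auto
  have "L = (\<Sum>H\<in>Pow Q. t ^ card (Q - H) * ((1 + \<sigma> * y) * mon (Q - H) x))"
    unfolding L_def by (rule sum.reindex_bij_betw[OF bij, symmetric])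
  also have "\<dots> = (\<Sum>H\<in>Pow Q. \<sigma> * t ^ (card Q - card H) * ((1 + \<sigma> * y) * mon H x))"
  proof (rule sum.cong[OF refl])
    fix H assume H: "H \<in> Pow Q"
    then have fH: "finite H" using fQ finite_subset by auto
    have "mon Q x = mon (Q - H) x * mon H x"
      unfolding mon_def using H fQ by (simp add: prod.subset_diff)
    moreover have "mon H x ^ 2 = 1" using ep1 H mon_sq[of H x] by auto
    ultimately have mQH: "mon (Q - H) x = y * mon H x"
      using my by (metis mult.assoc mult.right_neutral power2_eq_square)
    have "(1 + \<sigma> * y) * y = \<sigma> * (1 + \<sigma> * y)"
      using y2 s2 by (simp add: algebra_simps power2_eq_square)
    then show "t ^ card (Q - H) * ((1 + \<sigma> * y) * mon (Q - H) x) =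
          \<sigma> * t ^ (card Q - card H) * ((1 + \<sigma> * y) * mon H x)"
      using H fH by (simp add: card_Diff_subset mQH mult.assoc[symmetric])
  qed
  finally have L2: "L = (\<Sum>H\<in>Pow Q. \<sigma> * t ^ (card Q - card H) * ((1 + \<sigma> * y) * mon H x))" .
  have "(1 + \<sigma> * y) * WQ t Q x = (1/2) * (L + L)" using L1 by simp
  also have "L + L = (\<Sum>H\<in>Pow Q. (t ^ card H + \<sigma> * t ^ (card Q - card H)) * ((1 + \<sigma> * y) * mon H x))"
    by (subst (2) L2) (simp add: L_def sum.distrib[symmetric] algebra_simps)
  finally show ?thesis .
qed

lemma SS_base:
  assumes fV: "finite V" and a: "a \<in> V" and b: "b \<in> V" and K: "pnf V K"
  shows "\<bar>SS V a b (-1) K\<bar> \<le> SS V a b 1 K"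
proof -
  have s1: "SS V a b 1 K = (\<Sum>x\<in>configs V. K x) + (\<Sum>x\<in>configs V. x a * x b * K x)"
    unfolding SS_def by (simp add: algebra_simps sum.distrib)
  have s2: "SS V a b (-1) K = (\<Sum>x\<in>configs V. K x) - (\<Sum>x\<in>configs V. x a * x b * K x)"
    unfolding SS_def by (simp add: algebra_simps sum_subtractf)
  have "0 \<le> (\<Sum>x\<in>configs V. K x)" by (rule pnf_sum_nonneg[OF fV K])
  moreover have "0 \<le> (\<Sum>x\<in>configs V. x a * x b * K x)"
    by (rule pnf_sum_nonneg[OF fV]) (intro pnf_mult pnf_var a b K)
  ultimately show ?thesis using s1 s2 by linarith
qed

lemma core:
  fixes Q :: "nat \<Rightarrow> 'a set set"
  assumes fV: "finite V" and a: "a \<in> V" and b: "b \<in> V" and t: "0 \<le> t" and r: "0 \<le> r"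
    and Qf: "\<forall>i<m. finite (Q i)" and QV: "\<forall>i<m. \<forall>e\<in>Q i. e \<subseteq> V"
    and Qmon: "\<forall>i<m. \<forall>x\<in>configs V. mon (Q i) x = x a * x b"
    and Qsc: "\<forall>i<m. \<forall>h\<le>card (Q i). r * \<bar>t ^ h - t ^ (card (Q i) - h)\<bar> \<le> t ^ h + t ^ (card (Q i) - h)"
  shows "pnf V K \<Longrightarrow> r ^ m * \<bar>SS V a b (-1) (\<lambda>x. K x * (\<Prod>i<m. WQ t (Q i) x))\<bar>
            \<le> SS V a b 1 (\<lambda>x. K x * (\<Prod>i<m. WQ t (Q i) x))"
  using Qf QV Qmon Qsc
proof (induction m arbitrary: K)
  case 0
  then show ?case using SS_base[OF fV a b] by simp
next
  case (Suc m)
  define G where "G x = (\<Prod>i<m. WQ t (Q i) x)" for x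
  define k where "k = card (Q m)"
  define c where "c \<sigma> H = t ^ card H + \<sigma> * t ^ (k - card H)" for \<sigma> :: real and H :: "'a set set"
  have fQ: "finite (Q m)" using Suc.prems by auto
  have QVm: "\<forall>e\<in>Q m. e \<subseteq> V" using Suc.prems by auto
  have decomp: "SS V a b \<sigma> (\<lambda>x. K x * (\<Prod>i<Suc m. WQ t (Q i) x)) =
     (1/2) * (\<Sum>H\<in>Pow (Q m). c \<sigma> H * SS V a b \<sigma> (\<lambda>x. (K x * mon H x) * G x))"
    if s2: "\<sigma> ^ 2 = 1" for \<sigma>
  proof -
    have "SS V a b \<sigma> (\<lambda>x. K x * (\<Prod>i<Suc m. WQ t (Q i) x)) =
       (\<Sum>x\<in>configs V. (1/2) * (\<Sum>H\<in>Pow (Q m). c \<sigma> H * ((1 + \<sigma> * (x a * x b)) * ((K x * mon H x) * G x))))"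
      unfolding SS_def
    proof (rule sum.cong[OF refl])
      fix x assume x: "x \<in> configs V"
      have y2: "(x a * x b) ^ 2 = 1" using configs_sq[OF x a] configs_sq[OF x b]
        by (simp add: power_mult_distrib)
      have ep1: "\<forall>e\<in>Q m. ep e x ^ 2 = 1" using QVm ep_sq x by blast
      have pid: "(1 + \<sigma> * (x a * x b)) * WQ t (Q m) x =
        (1/2) * (\<Sum>H\<in>Pow (Q m). c \<sigma> H * ((1 + \<sigma> * (x a * x b)) * mon H x))"
        unfolding c_def k_def
        by (rule pair_id[OF fQ ep1 _ y2 s2]) (use Suc.prems x in auto)
      have "(1 + \<sigma> * (x a * x b)) * (K x * (\<Prod>i<Suc m. WQ t (Q i) x)) =
         K x * G x * ((1 + \<sigma> * (x a * x b)) * WQ t (Q m) x)"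
        by (simp add: G_def)
      also have "\<dots> = (1/2) * (\<Sum>H\<in>Pow (Q m). c \<sigma> H * ((1 + \<sigma> * (x a * x b)) * ((K x * mon H x) * G x)))"
        unfolding pid sum_distrib_left by (simp add: algebra_simps sum_distrib_left)
      finally show "(1 + \<sigma> * (x a * x b)) * (K x * (\<Prod>i<Suc m. WQ t (Q i) x)) = \<dots>" .
    qed
    also have "\<dots> = (1/2) * (\<Sum>H\<in>Pow (Q m). c \<sigma> H * SS V a b \<sigma> (\<lambda>x. (K x * mon H x) * G x))"
      unfolding SS_def sum_distrib_left[symmetric] by (simp add: sum_distrib_left sum.swap[of _ "configs V"])
    finally show ?thesis .
  qed
  have IH: "r ^ m * \<bar>SS V a b (-1) (\<lambda>x. (K x * mon H x) * G x)\<bar> \<le> SS V a b 1 (\<lambda>x. (K x * mon H x) * G x)"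
    if H: "H \<in> Pow (Q m)" for H
  proof -
    have "pnf V (\<lambda>x. K x * mon H x)"
      by (rule pnf_mult[OF Suc.prems(1)], rule pnf_mon[OF fV]) (use H fQ QVm finite_subset in auto)
    moreover have "\<forall>i<m. finite (Q i)" "\<forall>i<m. \<forall>e\<in>Q i. e \<subseteq> V"
      "\<forall>i<m. \<forall>x\<in>configs V. mon (Q i) x = x a * x b"
      "\<forall>i<m. \<forall>h\<le>card (Q i). r * \<bar>t ^ h - t ^ (card (Q i) - h)\<bar> \<le> t ^ h + t ^ (card (Q i) - h)"
      using Suc.prems by (simp_all add: less_Suc_eq)
    ultimately show ?thesis unfolding G_def by (rule Suc.IH)
  qed
  have sc: "r * \<bar>c (-1) H\<bar> \<le> c 1 H" if H: "H \<in> Pow (Q m)" for H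
  proof -
    have "card H \<le> k" unfolding k_def using H fQ card_mono by auto
    then show ?thesis using Suc.prems(5) unfolding c_def k_def by simp
  qed
  have cnn: "0 \<le> c 1 H" for H unfolding c_def using t by simp
  have "r ^ Suc m * \<bar>SS V a b (-1) (\<lambda>x. K x * (\<Prod>i<Suc m. WQ t (Q i) x))\<bar>
      = r ^ Suc m * \<bar>(1/2) * (\<Sum>H\<in>Pow (Q m). c (-1) H * SS V a b (-1) (\<lambda>x. (K x * mon H x) * G x))\<bar>"
    by (subst decomp[of "-1"]) simp_all
  also have "\<dots> \<le> (1/2) * (\<Sum>H\<in>Pow (Q m). r * \<bar>c (-1) H\<bar> * (r ^ m * \<bar>SS V a b (-1) (\<lambda>x. (K x * mon H x) * G x)\<bar>))"
  proof -
    have "\<bar>(\<Sum>H\<in>Pow (Q m). c (-1) H * SS V a b (-1) (\<lambda>x. (K x * mon H x) * G x))\<bar>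
       \<le> (\<Sum>H\<in>Pow (Q m). \<bar>c (-1) H * SS V a b (-1) (\<lambda>x. (K x * mon H x) * G x)\<bar>)"
      by (rule sum_abs)
    then have "r ^ Suc m * \<bar>(\<Sum>H\<in>Pow (Q m). c (-1) H * SS V a b (-1) (\<lambda>x. (K x * mon H x) * G x))\<bar>
       \<le> r ^ Suc m * (\<Sum>H\<in>Pow (Q m). \<bar>c (-1) H * SS V a b (-1) (\<lambda>x. (K x * mon H x) * G x)\<bar>)"
      using r by (simp add: mult_left_mono)
    also have "\<dots> = (\<Sum>H\<in>Pow (Q m). r * \<bar>c (-1) H\<bar> * (r ^ m * \<bar>SS V a b (-1) (\<lambda>x. (K x * mon H x) * G x)\<bar>))"
      unfolding sum_distrib_left by (rule sum.cong) (auto simp: abs_mult algebra_simps)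
    finally show ?thesis by (simp add: abs_mult)
  qed
  also have "\<dots> \<le> (1/2) * (\<Sum>H\<in>Pow (Q m). c 1 H * SS V a b 1 (\<lambda>x. (K x * mon H x) * G x))"
  proof -
    have "(\<Sum>H\<in>Pow (Q m). r * \<bar>c (-1) H\<bar> * (r ^ m * \<bar>SS V a b (-1) (\<lambda>x. (K x * mon H x) * G x)\<bar>))
       \<le> (\<Sum>H\<in>Pow (Q m). c 1 H * SS V a b 1 (\<lambda>x. (K x * mon H x) * G x))"
    proof (rule sum_mono)
      fix H assume H: "H \<in> Pow (Q m)"
      show "r * \<bar>c (-1) H\<bar> * (r ^ m * \<bar>SS V a b (-1) (\<lambda>x. (K x * mon H x) * G x)\<bar>)
          \<le> c 1 H * SS V a b 1 (\<lambda>x. (K x * mon H x) * G x)"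
        by (rule mult_mono[OF sc[OF H] IH[OF H] cnn]) (use r in simp)
    qed
    then show ?thesis by simp
  qed
  also have "\<dots> = SS V a b 1 (\<lambda>x. K x * (\<Prod>i<Suc m. WQ t (Q i) x))"
    by (subst decomp[of 1]) simp_all
  finally show ?case .
qed



definition pedges :: "'a list \<Rightarrow> 'a set set" where
  "pedges p = (\<lambda>j. {p ! j, p ! Suc j}) ` {..< length p - 1}"

lemma pedges_sub: "is_path E a b p \<Longrightarrow> pedges p \<subseteq> E"
  unfolding pedges_def is_path_def by auto

lemma pedges_fin: "finite (pedges p)" and pedges_card: "card (pedges p) \<le> length p - 1"
  unfolding pedges_def using card_image_le[of "{..< length p - 1}"] by auto

lemma path_vert:
  assumes p: "is_path E a b p" and EV: "\<forall>e\<in>E. e \<subseteq> V" and a: "a \<in> V"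
  shows "set p \<subseteq> V"
proof
  fix v assume "v \<in> set p"
  then obtain j where j: "j < length p" "v = p ! j" by (auto simp: in_set_conv_nth)
  show "v \<in> V"
  proof (cases "Suc j < length p")
    case True
    then have "{p ! j, p ! Suc j} \<in> E" using p unfolding is_path_def by blast
    then show ?thesis using EV j by auto
  next
    case False
    show ?thesis
    proof (cases j)
      case 0
      then have "v = hd p" using j p unfolding is_path_def by (metis hd_conv_nth)
      then show ?thesis using a p unfolding is_path_def by simp
    next
      case (Suc i)
      then have "{p ! i, p ! Suc i} \<in> E" using p j unfolding is_path_def by blast
      then show ?thesis using EV j Suc by auto
    qed
  qed
qed

lemma telescope:
  "(\<forall>j\<le>m. y j ^ 2 = (1::real)) \<Longrightarrow> (\<Prod>j<m. y j * y (Suc j)) = y 0 * y m"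
proof (induction m)
  case 0
  then show ?case by (simp add: power2_eq_square)
next
  case (Suc m)
  then have "(\<Prod>j<Suc m. y j * y (Suc j)) = y 0 * (y m * y m) * y (Suc m)" by simp
  also have "y m * y m = 1" using Suc.prems by (simp add: power2_eq_square)
  finally show ?case by simp
qed

lemma path_mon:
  assumes p: "is_path E a b p" and pV: "set p \<subseteq> V" and x: "x \<in> configs V"
  shows "mon (pedges p) x = x a * x b"
proof -
  have d: "distinct p" and ne: "p \<noteq> []" using p unfolding is_path_def by auto
  have inj: "inj_on (\<lambda>j. {p ! j, p ! Suc j}) {..< length p - 1}"
  proof (rule inj_onI)
    fix i j assume i: "i \<in> {..< length p - 1}" and j: "j \<in> {..< length p - 1}"
      and eq: "{p ! i, p ! Suc i} = {p ! j, p ! Suc j}"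
    have "p ! i = p ! j \<or> p ! i = p ! Suc j" using eq by blast
    moreover have "p ! Suc i = p ! j \<or> p ! Suc i = p ! Suc j" using eq by blast
    ultimately show "i = j" using i j d by (auto simp: nth_eq_iff_index_eq)
  qed
  have "mon (pedges p) x = (\<Prod>j<length p - 1. ep {p ! j, p ! Suc j} x)"
    unfolding mon_def pedges_def using prod.reindex[OF inj, of "\<lambda>e. ep e x"] by (simp add: o_def)
  also have "\<dots> = (\<Prod>j<length p - 1. x (p ! j) * x (p ! Suc j))"
  proof (rule prod.cong[OF refl])
    fix j assume "j \<in> {..< length p - 1}"
    then have "p ! j \<noteq> p ! Suc j" using d by (auto simp: nth_eq_iff_index_eq)
    then show "ep {p ! j, p ! Suc j} x = x (p ! j) * x (p ! Suc j)" unfolding ep_def by simp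
  qed
  also have "\<dots> = x (p ! 0) * x (p ! (length p - 1))"
  proof (rule telescope[where y = "\<lambda>j. x (p ! j)"], intro allI impI)
    fix j assume "j \<le> length p - 1"
    then have "j < length p" using ne by (cases p) auto
    then have "p ! j \<in> V" using pV nth_mem by blast
    then show "x (p ! j) ^ 2 = 1" using configs_sq[OF x] by blast
  qed
  also have "\<dots> = x a * x b" using p ne unfolding is_path_def by (simp add: hd_conv_nth last_conv_nth)
  finally show ?thesis .
qed

lemma path_ab:
  assumes p: "is_path E a b p" and i: "Suc i < length p" and ab: "{p ! i, p ! Suc i} \<subseteq> {a, b}"
  shows "p = [a, b]"
proof -
  have d: "distinct p" and ne: "p \<noteq> []" using p unfolding is_path_def by auto
  have a0: "p ! 0 = a" and bl: "p ! (length p - 1) = b"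
    using p ne unfolding is_path_def by (auto simp: hd_conv_nth last_conv_nth)
  have neq: "p ! i \<noteq> p ! Suc i" using d i by (auto simp: nth_eq_iff_index_eq)
  have "p ! i \<noteq> b"
  proof
    assume "p ! i = b"
    then have "i = length p - 1" using bl d i by (auto simp: nth_eq_iff_index_eq)
    then show False using i by simp
  qed
  then have "p ! i = a" using ab by auto
  then have i0: "i = 0" using a0 d i ne nth_eq_iff_index_eq[OF d, of i 0] by auto
  then have "p ! 1 = b" using ab neq \<open>p ! i = a\<close> by auto
  then have "1 = length p - 1" using bl d i i0 by (auto simp: nth_eq_iff_index_eq)
  then have len: "length p = 2" by simp
  then obtain u w where "p = [u, w]"
    by (metis (no_types, opaque_lifting) One_nat_def Suc_1 length_0_conv length_Suc_conv)
  then show ?thesis using a0 \<open>p ! 1 = b\<close> by simp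
qed

lemma pedges_disj:
  assumes p: "is_path E a b p" and q: "is_path E a b q" and pq: "p \<noteq> q"
    and inter: "set p \<inter> set q \<subseteq> {a, b}"
  shows "pedges p \<inter> pedges q = {}"
proof (rule ccontr)
  assume "pedges p \<inter> pedges q \<noteq> {}"
  then obtain i j where i: "i < length p - 1" and j: "j < length q - 1"
    and eq: "{p ! i, p ! Suc i} = {q ! j, q ! Suc j}"
    unfolding pedges_def by auto
  have "{p ! i, p ! Suc i} \<subseteq> set p" using i by auto
  moreover have "{p ! i, p ! Suc i} \<subseteq> set q" unfolding eq using j by auto
  ultimately have sub: "{p ! i, p ! Suc i} \<subseteq> {a, b}" using inter by blast
  have "p = [a, b]" by (rule path_ab[OF p _ sub]) (use i in simp)
  moreover have "q = [a, b]" by (rule path_ab[OF q _ sub[unfolded eq]]) (use j in simp)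
  ultimately show False using pq by simp
qed

lemma scal:
  fixes t :: real
  assumes t0: "0 < t" and t1: "t < 1" and hk: "h \<le> k" and kl: "k \<le> l"
  shows "((1 + t ^ l) / (1 - t ^ l)) * \<bar>t ^ h - t ^ (k - h)\<bar> \<le> t ^ h + t ^ (k - h)"
proof (cases "t ^ l = 1")
  case True
  then show ?thesis using t0 by simp
next
  case False
  define s where "s = t ^ l"
  define A where "A = t ^ h"
  define B where "B = t ^ (k - h)"
  have s1: "s < 1" using False t0 t1 unfolding s_def
    by (metis less_eq_real_def power_le_one)
  have s0: "0 \<le> s" using t0 unfolding s_def by simp
  have "s * A = t ^ (l + h)" unfolding s_def A_def by (simp add: power_add)
  also have "\<dots> \<le> B" unfolding B_def by (rule power_decreasing) (use hk kl t0 t1 in auto)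
  finally have sA: "s * A \<le> B" .
  have "s * B = t ^ (l + (k - h))" unfolding s_def B_def by (simp add: power_add)
  also have "\<dots> \<le> A" unfolding A_def by (rule power_decreasing) (use hk kl t0 t1 in auto)
  finally have sB: "s * B \<le> A" .
  have key: "(1 + s) * \<bar>A - B\<bar> \<le> (A + B) * (1 - s)"
  proof (cases "A \<ge> B")
    case True
    then have e: "\<bar>A - B\<bar> = A - B" by simp
    have "(1 + s) * (A - B) \<le> (A + B) * (1 - s)" using sA by (simp add: algebra_simps)
    then show ?thesis using e by simp
  next
    case False
    then have e: "\<bar>A - B\<bar> = B - A" by simp
    have "(1 + s) * (B - A) \<le> (A + B) * (1 - s)" using sB by (simp add: algebra_simps)
    then show ?thesis using e by simp
  qed
  have "((1 + s) / (1 - s)) * \<bar>A - B\<bar> = ((1 + s) * \<bar>A - B\<bar>) / (1 - s)" by simp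
  also have "\<dots> \<le> A + B" using key s1 by (simp add: divide_le_eq)
  finally show ?thesis unfolding s_def A_def B_def .
qed

lemma exp_pm:
  assumes "y ^ 2 = (1::real)"
  shows "exp (lam * y) = cosh lam * (1 + tanh lam * y)"
proof -
  have c: "cosh lam \<noteq> 0" using cosh_real_pos[of lam] by simp
  have "y = 1 \<or> y = -1" using assms by (simp add: power2_eq_1_iff)
  then show ?thesis
  proof
    assume "y = 1"
    then show ?thesis using cosh_plus_sinh[of lam] c by (simp add: tanh_def field_simps)
  next
    assume "y = -1"
    then show ?thesis using cosh_minus_sinh[of lam] c by (simp add: tanh_def field_simps)
  qed
qed



theorem lemma3:
  fixes V :: "'a set" and E :: "'a set set" and lam :: real and l d :: nat and a b :: 'a
  assumes "simple_graph V E" and "lam > 0" and "a \<in> V" and "b \<in> V"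
    and "ld_connected E l d a b"
  shows "ising_expect V E lam (\<lambda>x. x a * x b) \<ge>
    1 - 2 / (1 + (1 + tanh lam ^ l) ^ d / (1 - tanh lam ^ l) ^ d)"
proof -
  note sg = assms(1) and lam = assms(2) and a = assms(3) and b = assms(4)
  have fV: "finite V" and EV: "\<forall>e\<in>E. e \<subseteq> V" using sg unfolding simple_graph_def by auto
  have fE: "finite E" by (rule finite_subset[of _ "Pow V"]) (use EV fV in auto)
  define t where "t = tanh lam"
  have t0: "0 < t" and t1: "t < 1" unfolding t_def using lam tanh_real_lt_1 by auto
  obtain P :: "nat \<Rightarrow> 'a list" where Pinj: "inj_on P {..<d}"
    and Ppath: "\<forall>i<d. is_path E a b (P i) \<and> length (P i) - 1 \<le> l"
    and Pdisj: "\<forall>i<d. \<forall>j<d. i \<noteq> j \<longrightarrow> set (P i) \<inter> set (P j) \<subseteq> {a, b}"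
    using assms(5) unfolding ld_connected_def by (elim exE conjE) (rule that, assumption+)
  define Q where "Q i = pedges (P i)" for i
  define U where "U = (\<Union>i\<in>{..<d}. Q i)"
  have QE: "Q i \<subseteq> E" if "i < d" for i unfolding Q_def by (rule pedges_sub) (use Ppath that in blast)
  have UE: "U \<subseteq> E" unfolding U_def using QE by auto
  have Qf: "\<forall>i<d. finite (Q i)" unfolding Q_def using pedges_fin by blast
  have QV: "\<forall>i<d. \<forall>e\<in>Q i. e \<subseteq> V" using QE EV by blast
  have Qmon: "\<forall>i<d. \<forall>x\<in>configs V. mon (Q i) x = x a * x b"
  proof (intro allI impI ballI)
    fix i x assume i: "i < d" and x: "x \<in> configs V"
    have pi: "is_path E a b (P i)" using Ppath i by blast
    show "mon (Q i) x = x a * x b" unfolding Q_def by (rule path_mon[OF pi path_vert[OF pi EV a] x])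
  qed
  define r where "r = (1 + t ^ l) / (1 - t ^ l)"
  have r0: "0 \<le> r" unfolding r_def using t0 t1 by (simp add: power_le_one)
  have Qsc: "\<forall>i<d. \<forall>h\<le>card (Q i). r * \<bar>t ^ h - t ^ (card (Q i) - h)\<bar> \<le> t ^ h + t ^ (card (Q i) - h)"
  proof (intro allI impI)
    fix i h assume i: "i < d" and h: "h \<le> card (Q i)"
    have "card (Q i) \<le> length (P i) - 1" unfolding Q_def by (rule pedges_card)
    also have "\<dots> \<le> l" using Ppath i by blast
    finally have cl: "card (Q i) \<le> l" .
    show "r * \<bar>t ^ h - t ^ (card (Q i) - h)\<bar> \<le> t ^ h + t ^ (card (Q i) - h)"
      unfolding r_def by (rule scal[OF t0 t1 h cl])
  qed
  define K where "K x = (\<Prod>e\<in>E - U. 1 + t * ep e x)" for x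
  have Kp: "pnf V K" unfolding K_def[abs_def]
    by (rule pnf_W) (use fV fE EV t0 in auto)
  define WE where "WE x = (\<Prod>e\<in>E. 1 + t * ep e x)" for x
  have disj: "\<forall>i\<in>{..<d}. \<forall>j\<in>{..<d}. i \<noteq> j \<longrightarrow> Q i \<inter> Q j = {}"
  proof (intro ballI impI)
    fix i j assume i: "i \<in> {..<d}" and j: "j \<in> {..<d}" and ij: "i \<noteq> j"
    have pij: "P i \<noteq> P j" using Pinj i j ij unfolding inj_on_def by blast
    show "Q i \<inter> Q j = {}" unfolding Q_def
      by (rule pedges_disj[OF _ _ pij]) (use Ppath Pdisj i j ij in auto)
  qed
  have WEdec: "WE x = K x * (\<Prod>i<d. WQ t (Q i) x)" for x
  proof -
    have "WE x = K x * (\<Prod>e\<in>U. 1 + t * ep e x)"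
      unfolding WE_def K_def by (rule prod.subset_diff[OF UE fE])
    also have "(\<Prod>e\<in>U. 1 + t * ep e x) = (\<Prod>i<d. WQ t (Q i) x)"
      unfolding U_def WQ_def by (rule prod.UNION_disjoint) (use Qf disj in auto)
    finally show ?thesis .
  qed
  have core': "r ^ d * \<bar>SS V a b (-1) WE\<bar> \<le> SS V a b 1 WE"
    using core[OF fV a b _ r0 Qf QV Qmon Qsc Kp] t0 unfolding WEdec[abs_def] by simp
  define Z where "Z = (\<Sum>x\<in>configs V. WE x)"
  define N where "N = (\<Sum>x\<in>configs V. x a * x b * WE x)"
  have S1: "SS V a b 1 WE = Z + N" unfolding SS_def Z_def N_def
    by (simp add: algebra_simps sum.distrib)
  have S2: "SS V a b (-1) WE = Z - N" unfolding SS_def Z_def N_def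
    by (simp add: algebra_simps sum_subtractf)
  have WEpos: "0 < WE x" if x: "x \<in> configs V" for x
    unfolding WE_def
  proof (rule prod_pos)
    fix e assume "e \<in> E"
    then have "ep e x ^ 2 = 1" using ep_sq EV x by blast
    then have "ep e x = 1 \<or> ep e x = -1" by (simp add: power2_eq_1_iff)
    then show "0 < 1 + t * ep e x" using t0 t1 by auto
  qed
  have cne: "(\<lambda>v. if v \<in> V then 1 else 0) \<in> configs V" unfolding configs_def by auto
  have Zpos: "0 < Z" unfolding Z_def
    by (rule sum_pos[OF finite_configs[OF fV]]) (use cne WEpos in auto)
  have iw: "ising_weight E lam x = cosh lam ^ card E * WE x" if x: "x \<in> configs V" for x
  proof -
    have "ising_weight E lam x = (\<Prod>e\<in>E. exp (lam * ep e x))"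
      unfolding ising_weight_def ep_def by (rule exp_sum[OF fE])
    also have "\<dots> = (\<Prod>e\<in>E. cosh lam * (1 + t * ep e x))"
      unfolding t_def by (rule prod.cong[OF refl], rule exp_pm) (use ep_sq EV x in blast)
    also have "\<dots> = cosh lam ^ card E * WE x" unfolding WE_def by (simp add: prod.distrib)
    finally show ?thesis .
  qed
  define C where "C = cosh lam ^ card E"
  have Cpos: "0 < C" unfolding C_def by simp
  have IE: "ising_expect V E lam (\<lambda>x. x a * x b) = N / Z"
  proof -
    have "ising_expect V E lam (\<lambda>x. x a * x b) =
      (\<Sum>x\<in>configs V. x a * x b * (C * WE x)) / (\<Sum>x\<in>configs V. C * WE x)"
      unfolding ising_expect_def C_def by (simp add: iw cong: sum.cong)
    also have "\<dots> = (C * N) / (C * Z)" unfolding N_def Z_def sum_distrib_left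
      by (simp add: algebra_simps)
    also have "\<dots> = N / Z" using Cpos by simp
    finally show ?thesis .
  qed
  define R where "R = (1 + t ^ l) ^ d / (1 - t ^ l) ^ d"
  have RR: "R = r ^ d" unfolding R_def r_def by (simp add: power_divide)
  have R0: "0 \<le> R" unfolding RR using r0 by simp
  have main: "R * (Z - N) \<le> Z + N"
  proof -
    have "R * (Z - N) \<le> R * \<bar>Z - N\<bar>" using R0 by (simp add: mult_left_mono)
    also have "\<dots> \<le> Z + N" using core' S1 S2 RR by simp
    finally show ?thesis .
  qed
  have "1 - 2 / (1 + R) \<le> N / Z"
  proof -
    have "1 - 2 / (1 + R) = (R - 1) / (1 + R)" using R0 by (simp add: field_simps)
    also have "\<dots> \<le> N / Z"
      using main R0 Zpos by (simp add: divide_le_eq le_divide_eq field_simps) 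
    finally show ?thesis .
  qed
  then show ?thesis unfolding IE R_def t_def .
qed


end
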